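(* Let $\rho$ be a primitive $k$th root of unity and $0<\theta<2\pi/k$. For all $N\ge1$ with $k\mid N$, $$\prod_{j=1}^N\big|\rho^je^{ij\theta/N}-1\big|^{-1}\ll N^{4k}\exp\Big(\frac Nk\cdot\frac{\mathrm{Cl}_2(k\theta)}{k\theta}\Big),$$ with implied constant depending only on $k$ and $\theta$.
   Context: $\mathrm{Cl}_2(\theta):=\sum_{k\ge1}k^{-2}\sin(k\theta)$ is the Clausen function. *)

theory Defs
  imports "HOL-Analysis.Analysis"
begin

definition Cl2 :: "real \<Rightarrow> real" where
  "Cl2 t = (\<Sum>n. sin (real (Suc n) * t) / (real (Suc n))\<^sup>2)"

definition primitive_root_unity :: "nat \<Rightarrow> complex \<Rightarrow> bool" where
  "primitive_root_unity k z \<longleftrightarrow> k \<ge> 1 \<and> z ^ k = 1 \<and> (\<forall>m. 0 < m \<and> m < k \<longrightarrow> z ^ m \<noteq> 1)"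

end

theory Submission
  imports Defs "HOL-Computational_Algebra.Polynomial"
begin

lemma norm_1_cis_sq: "(cmod (1 - cis x))^2 = 2 - 2 * cos x"
proof -
  have "(cmod (1 - cis x))^2 = (1 - cos x)^2 + (sin x)^2"
    by (simp add: cmod_power2)
  also have "\<dots> = 2 - 2 * cos x" using sin_cos_squared_add[of x]
    by (simp add: power2_eq_square algebra_simps)
  finally show ?thesis .
qed

lemma norm_1_rcis_sq: "(cmod (1 - of_real r * cis x))^2 = (1-r)^2 + r * (cmod (1 - cis x))^2"
proof -
  have ss: "sin x * sin x = 1 - cos x * cos x" using sin_squared_eq[of x] by (simp add: power2_eq_square)
  have "(cmod (1 - of_real r * cis x))^2 = (Re (1 - of_real r * cis x))^2 + (Im (1 - of_real r * cis x))^2"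
    by (rule cmod_power2)
  also have "\<dots> = (1 - r * cos x)^2 + (r * sin x)^2" by simp
  also have "\<dots> = (1-r)^2 + r * (2 - 2 * cos x)"
    by (simp add: power2_eq_square algebra_simps ss)
  finally show ?thesis by (simp add: norm_1_cis_sq)
qed

lemma cis_ne_1: assumes "0 < x" "x < 2*pi" shows "cis x \<noteq> 1"
proof
  assume "cis x = 1"
  hence "cos x = 1" by (simp add: complex_eq_iff)
  then obtain n::int where n: "x = real_of_int n * 2 * pi" using cos_one_2pi_int by blast
  with assms have a: "0 < pi * real_of_int n" "pi * real_of_int n < pi"
    by (auto simp: field_simps)
  hence "0 < real_of_int n" using pi_gt_zero by (simp add: zero_less_mult_iff)
  moreover have "real_of_int n < 1" using a(2) pi_gt_zero by simp
  ultimately have "n > 0" "n < 1" by simp_all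
  thus False by linarith
qed

lemma norm_1_cis_pos: assumes "0 < x" "x < 2*pi" shows "cmod (1 - cis x) > 0"
  using cis_ne_1[OF assms] by simp

lemma norm_1_cis_le2: "cmod (1 - cis x) \<le> 2"
proof -
  have "cmod (1 - cis x) \<le> cmod 1 + cmod (cis x)" by (rule norm_triangle_ineq4)
  thus ?thesis by simp
qed

definition gf :: "real \<Rightarrow> real" where "gf x = - ln (cmod (1 - cis x))"

lemma gf_lower: "gf x \<ge> - ln 2"
proof (cases "cmod (1 - cis x) = 0")
  case True thus ?thesis by (simp add: gf_def)
next
  case False
  hence "ln (cmod (1 - cis x)) \<le> ln 2" using norm_1_cis_le2[of x] by (subst ln_le_cancel_iff) auto
  thus ?thesis by (simp add: gf_def)
qed


lemma ser_cos:
  assumes "0 \<le> r" "r < 1"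
  shows "(\<lambda>n. r^(Suc n) * cos (real (Suc n) * t) / real (Suc n)) sums (- ln (cmod (1 - of_real r * cis t)))"
proof -
  define w where "w = of_real r * cis t"
  have nw: "norm w < 1" using assms by (simp add: w_def norm_mult)
  have "(\<lambda>n. - ((-(-w))^n) / of_nat n) sums ln (1 + (-w))"
    by (rule Ln_series') (use nw in simp)
  hence "(\<lambda>n. - (w^n) / of_nat n) sums ln (1 - w)" by simp
  hence "(\<lambda>n. Re (- (w^n) / of_nat n)) sums Re (ln (1 - w))" by (rule sums_Re)
  moreover have "1 - w \<noteq> 0" using nw by auto
  ultimately have "(\<lambda>n. - (r^n * cos (real n * t)) / real n) sums ln (cmod (1 - w))"
    by (simp add: w_def power_mult_distrib Complex.DeMoivre Re_divide_of_nat flip: of_real_power)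
  hence "(\<lambda>n. - (r^(Suc n) * cos (real (Suc n) * t)) / real (Suc n)) sums ln (cmod (1 - w))"
    by (subst sums_Suc_iff) simp
  from sums_minus[OF this] show ?thesis by (simp add: w_def)
qed

lemma summable_inv_sq: "summable (\<lambda>n. 1 / (real (Suc n))^2)"
proof -
  have "summable (\<lambda>n. inverse (of_nat n ^ 2 :: real))" by (rule inverse_power_summable) simp
  hence "summable (\<lambda>n. inverse (of_nat (Suc n) ^ 2 :: real))" by (subst summable_Suc_iff)
  thus ?thesis by (simp add: divide_inverse)
qed

definition Fr :: "real \<Rightarrow> real \<Rightarrow> real" where
  "Fr r t = (\<Sum>n. r^(Suc n) * sin (real (Suc n) * t) / (real (Suc n))\<^sup>2)"

lemma Fr_deriv:
  assumes "0 \<le> r" "r < 1"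
  shows "(Fr r has_real_derivative (- ln (cmod (1 - of_real r * cis t)))) (at t)"
proof -
  let ?f = "\<lambda>n t. r^(Suc n) * sin (real (Suc n) * t) / (real (Suc n))\<^sup>2"
  let ?f' = "\<lambda>n t. r^(Suc n) * cos (real (Suc n) * t) / real (Suc n)"
  have d: "(?f n has_field_derivative ?f' n x) (at x within UNIV)" for n x
  proof -
    define c where "c = real (Suc n)"
    have c: "c > 0" by (simp add: c_def)
    have "((\<lambda>t. (r^(Suc n) / c\<^sup>2) * sin (c * t)) has_field_derivative ((r^(Suc n) / c\<^sup>2) * (cos (c * x) * c))) (at x within UNIV)"
      by (intro DERIV_cmult DERIV_fun_sin derivative_eq_intros) auto
    also have "(r^(Suc n) / c\<^sup>2) * (cos (c * x) * c) = r^(Suc n) * cos (c * x) / c"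
      using c by (simp add: power2_eq_square)
    also have "(\<lambda>t. (r^(Suc n) / c\<^sup>2) * sin (c * t)) = ?f n" by (auto simp: c_def)
    finally show ?thesis by (simp add: c_def)
  qed
  have u: "uniformly_convergent_on UNIV (\<lambda>n x. \<Sum>i<n. ?f' i x)"
  proof (rule Weierstrass_m_test')
    show "summable (\<lambda>n. r^(Suc n))" using assms by (simp add: summable_geometric)
    fix n x
    have c1: "\<bar>cos (real (Suc n) * x)\<bar> \<le> real (Suc n)"
      using abs_cos_le_one[of "real (Suc n) * x"] by linarith
    have "\<bar>cos (real (Suc n) * x)\<bar> / real (Suc n) \<le> 1"
      using c1 by (subst divide_le_eq_1_pos) auto
    hence "r^(Suc n) * (\<bar>cos (real (Suc n) * x)\<bar> / real (Suc n)) \<le> r^(Suc n) * 1"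
      using assms by (intro mult_left_mono) auto
    moreover have "norm (?f' n x) = r^(Suc n) * (\<bar>cos (real (Suc n) * x)\<bar> / real (Suc n))"
      using assms by (simp only: real_norm_def abs_divide abs_mult abs_of_nat power_abs abs_of_nonneg times_divide_eq_right)
    ultimately show "norm (?f' n x) \<le> r^(Suc n)" by simp
  qed
  have "((\<lambda>x. \<Sum>n. ?f n x) has_field_derivative (\<Sum>n. ?f' n t)) (at t)"
    by (rule has_field_derivative_series'(2)[OF convex_UNIV d u, of 0]) auto
  moreover have "(\<Sum>n. ?f' n t) = - ln (cmod (1 - of_real r * cis t))"
    using ser_cos[OF assms] by (simp add: sums_iff)
  ultimately show ?thesis unfolding Fr_def[abs_def] by simp
qed

lemma Fr_cont: "continuous_on {0..1} (\<lambda>r. Fr r t)"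
proof -
  let ?f = "\<lambda>n r. r^(Suc n) * sin (real (Suc n) * t) / (real (Suc n))\<^sup>2"
  have "uniform_limit {0..1} (\<lambda>n r. \<Sum>i<n. ?f i r) (\<lambda>r. suminf (\<lambda>i. ?f i r)) sequentially"
  proof (rule Weierstrass_m_test[OF _ summable_inv_sq])
    fix n and r :: real assume r: "r \<in> {0..1}"
    have "r^(Suc n) * \<bar>sin (real (Suc n) * t)\<bar> \<le> 1 * 1"
      using r by (intro mult_mono power_le_one abs_sin_le_one) auto
    hence a: "\<bar>r^(Suc n) * sin (real (Suc n) * t)\<bar> \<le> 1" using r by (simp add: abs_mult)
    have "norm (?f n r) = \<bar>r^(Suc n) * sin (real (Suc n) * t)\<bar> / (real (Suc n))^2"
      by (simp only: real_norm_def abs_divide abs_power2 abs_of_nat)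
    also have "\<dots> \<le> 1 / (real (Suc n))^2" by (rule divide_right_mono[OF a]) simp
    finally show "norm (?f n r) \<le> 1 / (real (Suc n))^2" .
  qed
  hence "continuous_on {0..1} (\<lambda>r. suminf (\<lambda>i. ?f i r))"
    apply (rule uniform_limit_theorem[rotated])
     apply simp
    apply (rule always_eventually, intro allI continuous_on_sum continuous_on_divide continuous_on_sin continuous_on_mult continuous_on_power continuous_on_const continuous_on_id)
    apply auto
    done
  thus ?thesis unfolding Fr_def .
qed

lemma Fr_1: "Fr 1 t = Cl2 t" by (simp add: Fr_def Cl2_def)

lemma Cl2_cont: "continuous_on UNIV Cl2"
proof -
  let ?f = "\<lambda>n t. sin (real (Suc n) * t) / (real (Suc n))\<^sup>2"
  have "uniform_limit UNIV (\<lambda>n t. \<Sum>i<n. ?f i t) (\<lambda>t. suminf (\<lambda>i. ?f i t)) sequentially"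
  proof (rule Weierstrass_m_test[OF _ summable_inv_sq])
    fix n and t :: real
    have "norm (?f n t) = \<bar>sin (real (Suc n) * t)\<bar> / (real (Suc n))^2"
      by (simp only: real_norm_def abs_divide abs_power2 abs_of_nat)
    also have "\<dots> \<le> 1 / (real (Suc n))^2" by (rule divide_right_mono[OF abs_sin_le_one]) simp
    finally show "norm (?f n t) \<le> 1 / (real (Suc n))^2" .
  qed
  hence "continuous_on UNIV (\<lambda>t. suminf (\<lambda>i. ?f i t))"
    apply (rule uniform_limit_theorem[rotated])
     apply simp
    apply (rule always_eventually, intro allI continuous_on_sum continuous_on_divide continuous_on_sin continuous_on_mult continuous_on_power continuous_on_const continuous_on_id)
    apply auto
    done
  thus ?thesis unfolding Cl2_def[abs_def] .
qed

lemma Cl2_0: "Cl2 0 = 0" by (simp add: Cl2_def)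

lemma ln_diff_bound:
  fixes a b :: real
  assumes "0 < a" "0 < b"
  shows "\<bar>ln a - ln b\<bar> \<le> \<bar>a - b\<bar> / min a b"
proof -
  have 1: "ln a - ln b \<le> (a - b) / b"
  proof -
    have "ln (a / b) \<le> a / b - 1" by (rule ln_le_minus_one) (use assms in simp)
    thus ?thesis using assms by (simp add: ln_div diff_divide_distrib)
  qed
  have 2: "ln b - ln a \<le> (b - a) / a"
  proof -
    have "ln (b / a) \<le> b / a - 1" by (rule ln_le_minus_one) (use assms in simp)
    thus ?thesis using assms by (simp add: ln_div diff_divide_distrib)
  qed
  have m: "0 < min a b" using assms by simp
  have "(a - b) / b \<le> \<bar>a - b\<bar> / min a b"
    using assms m by (intro frac_le) auto
  moreover have "(b - a) / a \<le> \<bar>a - b\<bar> / min a b"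
    using assms m by (intro frac_le) auto
  ultimately show ?thesis using 1 2 by linarith
qed

lemma gr_close:
  assumes r: "1/2 \<le> r" "r \<le> 1" and c: "0 < c" "c \<le> cmod (1 - cis t)"
  shows "\<bar>(- ln (cmod (1 - of_real r * cis t))) - gf t\<bar> \<le> 2 * (1 - r) / c"
proof -
  define A where "A = cmod (1 - of_real r * cis t)"
  define B where "B = cmod (1 - cis t)"
  have B: "c \<le> B" "0 < B" using c by (auto simp: B_def)
  have "A^2 = (1-r)^2 + r * B^2" by (simp add: A_def B_def norm_1_rcis_sq)
  also have "\<dots> \<ge> (B/2)^2"
  proof -
    have "r * B^2 \<ge> (1/2) * B^2" using r by (intro mult_right_mono) auto
    moreover have "(1/2) * B^2 \<ge> (B/2)^2" by (simp add: power2_eq_square)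
    ultimately show ?thesis by (smt (verit) zero_le_power2)
  qed
  finally have "B/2 \<le> A" by (rule power2_le_imp_le) (simp add: A_def)
  hence A: "0 < A" "c/2 \<le> min A B" using B by auto
  have "\<bar>A - B\<bar> \<le> cmod ((1 - of_real r * cis t) - (1 - cis t))"
    unfolding A_def B_def by (rule norm_triangle_ineq3)
  also have "(1 - of_real r * cis t) - (1 - cis t) = of_real (1 - r) * cis t" by (simp add: algebra_simps)
  also have "cmod \<dots> = \<bar>1 - r\<bar>" by (simp only: norm_mult norm_of_real norm_cis mult_1_right)
  also have "\<dots> = 1 - r" using r by simp
  finally have d: "\<bar>A - B\<bar> \<le> 1 - r" .
  have "\<bar>(- ln A) - (- ln B)\<bar> = \<bar>ln A - ln B\<bar>" by simp
  also have "\<dots> \<le> \<bar>A - B\<bar> / min A B" by (rule ln_diff_bound) (use A B in auto)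
  also have "\<dots> \<le> (1 - r) / (c/2)"
    using A d c by (intro frac_le) auto
  also have "\<dots> = 2 * (1 - r) / c" by simp
  finally show ?thesis by (simp add: gf_def A_def B_def)
qed

lemma Cl2_deriv:
  assumes x: "0 < x" "x < 2*pi"
  shows "(Cl2 has_real_derivative gf x) (at x)"
proof -
  define a where "a = x/2"
  define b where "b = (x + 2*pi)/2"
  define S where "S = {a..b}"
  have ab: "0 < a" "a < x" "x < b" "b < 2*pi" using x by (auto simp: a_def b_def)
  have "\<exists>t0\<in>S. \<forall>t\<in>S. cmod (1 - cis t0) \<le> cmod (1 - cis t)"
    unfolding S_def using ab
    by (intro continuous_attains_inf continuous_on_norm continuous_on_diff continuous_on_const continuous_on_cis continuous_on_id) auto
  then obtain t0 where t0: "t0 \<in> S" "\<And>t. t \<in> S \<Longrightarrow> cmod (1 - cis t0) \<le> cmod (1 - cis t)" by blast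
  define c where "c = cmod (1 - cis t0)"
  have c: "0 < c" unfolding c_def using t0(1) ab by (intro norm_1_cis_pos) (auto simp: S_def)
  define r where "r n = 1 - 1 / (real n + 2)" for n
  have r: "1/2 \<le> r n" "r n < 1" "0 \<le> r n" for n by (auto simp: r_def field_simps)
  have rlim: "r \<longlonglongrightarrow> 1"
  proof -
    have "(\<lambda>n. inverse (real (Suc (n + 1)))) \<longlonglongrightarrow> 0"
      using LIMSEQ_ignore_initial_segment[OF LIMSEQ_inverse_real_of_nat, of 1] .
    hence "(\<lambda>n. 1 / (real n + 2)) \<longlonglongrightarrow> 0" by (simp add: divide_inverse add.commute)
    from tendsto_diff[OF tendsto_const[of 1] this] show ?thesis by (simp add: r_def[abs_def])
  qed
  define f where "f n = Fr (r n)" for n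
  define D where "D n t = - ln (cmod (1 - of_real (r n) * cis t))" for n t
  have derf: "(f n has_derivative (*) (D n t)) (at t within S)" for n t
    using Fr_deriv[OF r(3) r(2), of n t] unfolding f_def D_def has_field_derivative_def
    by (rule has_derivative_at_withinI)
  have nle: "\<forall>\<^sub>F n in sequentially. \<forall>t\<in>S. \<forall>h. norm (D n t * h - gf t * h) \<le> e * norm h"
    if e: "e > 0" for e
  proof -
    have "(\<lambda>n. 2 * (1 - r n) / c) \<longlonglongrightarrow> 2 * (1 - 1) / c"
      by (intro tendsto_intros rlim) (use c in auto)
    hence "\<forall>\<^sub>F n in sequentially. 2 * (1 - r n) / c < e" using e
      by (simp add: order_tendsto_iff)
    thus ?thesis
    proof eventually_elim
      case (elim n)
      show ?case
      proof (intro ballI allI)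
        fix t h assume t: "t \<in> S"
        have "\<bar>D n t - gf t\<bar> \<le> 2 * (1 - r n) / c"
          unfolding D_def using r(1,2)[of n] c t0(2)[OF t] by (intro gr_close) (auto simp: c_def)
        hence "\<bar>D n t - gf t\<bar> \<le> e" using elim by linarith
        hence "\<bar>D n t - gf t\<bar> * \<bar>h\<bar> \<le> e * \<bar>h\<bar>" by (intro mult_right_mono) auto
        thus "norm (D n t * h - gf t * h) \<le> e * norm h"
          by (simp add: abs_mult flip: left_diff_distrib)
      qed
    qed
  qed
  have flim: "(\<lambda>n. f n t) \<longlonglongrightarrow> Cl2 t" for t
  proof -
    have "(\<lambda>n. Fr (r n) t) \<longlonglongrightarrow> Fr 1 t"
      by (rule continuous_on_tendsto_compose[OF Fr_cont rlim]) (use r in \<open>auto intro!: always_eventually less_imp_le\<close>)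
    thus ?thesis by (simp add: f_def Fr_1)
  qed
  have xS: "x \<in> S" using ab by (simp add: S_def)
  have cS: "convex S" unfolding S_def by (rule convex_real_interval)
  have "\<exists>g. \<forall>t\<in>S. (\<lambda>n. f n t) \<longlonglongrightarrow> g t \<and> (g has_derivative (*) (gf t)) (at t within S)"
    by (rule has_derivative_sequence[of S f "\<lambda>n t. (*) (D n t)" "\<lambda>t. (*) (gf t)" x "Cl2 x", OF cS derf nle xS flim])
  then obtain g where g: "\<And>t. t \<in> S \<Longrightarrow> (\<lambda>n. f n t) \<longlonglongrightarrow> g t \<and> (g has_derivative (*) (gf t)) (at t within S)"
    by blast
  have eqg: "\<And>t. t \<in> S \<Longrightarrow> Cl2 t = g t" using LIMSEQ_unique[OF flim] g by blast
  have "(Cl2 has_derivative (*) (gf x)) (at x within S)"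
    using has_derivative_transform[of x S Cl2 g "(*) (gf x)", OF xS eqg] g[OF xS] by blast
  moreover have "x \<in> interior S" using ab by (simp add: S_def)
  hence "at x within S = at x" by (rule at_within_interior)
  ultimately show ?thesis unfolding has_field_derivative_def by simp
qed

lemma cos_ge_cos:
  assumes "0 \<le> t" "t \<le> x" "t \<le> 2*pi - x"
  shows "cos x \<le> cos t"
proof (cases "x \<le> pi")
  case True thus ?thesis using assms by (intro cos_monotone_0_pi_le) auto
next
  case False
  have "cos (2*pi - x) \<le> cos t" using assms False by (intro cos_monotone_0_pi_le) auto
  thus ?thesis by (simp add: cos_diff)
qed

lemma gf_conv:
  assumes "0 \<le> t" "0 < x - t" "x + t < 2*pi"
  shows "2 * gf x \<le> gf (x + t) + gf (x - t)"
proof -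
  define P where "P = cmod (1 - cis (x + t)) * cmod (1 - cis (x - t))"
  define Q where "Q = cmod (1 - cis x) ^ 2"
  have P0: "0 < P" unfolding P_def using assms by (intro mult_pos_pos norm_1_cis_pos) auto
  have ss: "sin x * sin x = 1 - cos x * cos x" "sin t * sin t = 1 - cos t * cos t"
    using sin_squared_eq[of x] sin_squared_eq[of t] by (simp_all add: power2_eq_square)
  have "P^2 = (2 - 2 * cos (x + t)) * (2 - 2 * cos (x - t))"
    by (simp add: P_def power_mult_distrib norm_1_cis_sq)
  also have "\<dots> = 4 * (cos x - cos t)^2"
    unfolding cos_add cos_diff power2_eq_square using ss by algebra
  finally have P2: "P^2 = 4 * (cos x - cos t)^2" .
  have "Q^2 = (2 - 2 * cos x)^2"
    by (simp add: Q_def norm_1_cis_sq)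
  hence Q2: "Q^2 = 4 * (1 - cos x)^2" by (simp add: power2_eq_square algebra_simps)
  have ct: "cos x \<le> cos t" using assms by (intro cos_ge_cos) auto
  have "\<bar>cos x - cos t\<bar> \<le> 1 - cos x" using ct cos_le_one[of t] by linarith
  hence "(cos x - cos t)^2 \<le> (1 - cos x)^2"
    by (metis abs_le_square_iff abs_of_nonneg cos_le_one diff_ge_0_iff_ge)
  hence "P^2 \<le> Q^2" using P2 Q2 by simp
  hence "P \<le> Q" by (rule power2_le_imp_le) (simp add: Q_def)
  hence "ln P \<le> ln Q" using P0 by simp
  moreover have "ln P = - gf (x + t) - gf (x - t)"
  proof -
    have p1: "cmod (1 - cis (x + t)) > 0" "cmod (1 - cis (x - t)) > 0"
      by (rule norm_1_cis_pos; use assms in linarith)+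
    show ?thesis unfolding P_def gf_def using p1 by (simp add: ln_mult)
  qed
  moreover have "ln Q = - 2 * gf x"
    unfolding Q_def gf_def using assms by (subst ln_realpow) (auto intro!: norm_1_cis_pos)
  ultimately show ?thesis by simp
qed

lemma Cl2_deriv': "0 < x \<Longrightarrow> x < 2*pi \<Longrightarrow> DERIV Cl2 x :> gf x"
  using Cl2_deriv by blast

lemma HH:
  assumes "0 \<le> h" "0 < x - h" "x + h < 2*pi"
  shows "2 * h * gf x \<le> Cl2 (x + h) - Cl2 (x - h)"
proof -
  define \<phi> where "\<phi> t = Cl2 (x + t) - Cl2 (x - t) - 2 * t * gf x" for t
  have "\<phi> 0 \<le> \<phi> h"
  proof (rule DERIV_nonneg_imp_increasing_open[OF assms(1)])
    fix t assume t: "0 < t" "t < h"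
    have d1: "DERIV (\<lambda>t. Cl2 (x + t)) t :> gf (x + t) * 1"
      by (rule DERIV_chain2[OF Cl2_deriv']) (use assms t in \<open>auto intro!: derivative_eq_intros\<close>)
    have d2: "DERIV (\<lambda>t. Cl2 (x - t)) t :> gf (x - t) * (-1)"
      by (rule DERIV_chain2[OF Cl2_deriv']) (use assms t in \<open>auto intro!: derivative_eq_intros\<close>)
    have "DERIV \<phi> t :> gf (x + t) * 1 - gf (x - t) * (-1) - 2 * gf x"
      unfolding \<phi>_def[abs_def]
      by (intro DERIV_diff d1 d2) (auto intro!: derivative_eq_intros)
    moreover have "gf (x + t) * 1 - gf (x - t) * (-1) - 2 * gf x \<ge> 0"
      using gf_conv[of t x] assms t by simp
    ultimately show "\<exists>y. DERIV \<phi> t :> y \<and> 0 \<le> y" by blast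
  next
    have cC: "\<And>y. isCont Cl2 y" using Cl2_cont by (simp add: continuous_on_eq_continuous_at)
    have "isCont \<phi> t" for t unfolding \<phi>_def[abs_def]
      by (intro continuous_diff continuous_mult continuous_const continuous_ident isCont_o2[OF _ cC] continuous_add continuous_minus)
    thus "continuous_on {0..h} \<phi>" by (simp add: continuous_at_imp_continuous_on)
  qed
  thus ?thesis by (simp add: \<phi>_def)
qed

lemma Cl2_incr_lower:
  assumes "0 \<le> a" "a \<le> b" "b < 2*pi"
  shows "- (b - a) * ln 2 \<le> Cl2 b - Cl2 a"
proof (cases "a = b")
  case True thus ?thesis by simp
next
  case False
  hence ab: "a < b" using assms by simp
  have diff: "Cl2 differentiable (at z)" if "a < z" "z < b" for z
  proof -
    have "0 < z" "z < 2*pi" using that assms by linarith+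
    hence "DERIV Cl2 z :> gf z" by (rule Cl2_deriv')
    thus ?thesis unfolding real_differentiable_def by blast
  qed
  obtain l z where z: "a < z" "z < b" "DERIV Cl2 z :> l" "Cl2 b - Cl2 a = (b - a) * l"
    using MVT[OF ab continuous_on_subset[OF Cl2_cont subset_UNIV] diff] by blast
  have "l = gf z" using DERIV_unique[OF z(3) Cl2_deriv'[of z]] z assms by simp
  hence "l \<ge> - ln 2" using gf_lower by simp
  hence "(b - a) * (- ln 2) \<le> (b - a) * l" using ab by (intro mult_left_mono) auto
  moreover have "(a - b) * ln 2 = -((b - a) * ln 2)" by algebra
  ultimately show ?thesis using z(4) by simp
qed

lemma sin_half_lower:
  fixes y :: real
  assumes "0 \<le> y" "y \<le> 1"
  shows "y / 2 \<le> sin y"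
proof -
  define \<phi> :: "real \<Rightarrow> real" where "\<phi> u = sin u - u / 2" for u
  have "\<phi> 0 \<le> \<phi> y"
  proof (rule DERIV_nonneg_imp_increasing_open[OF assms(1)])
    fix u assume u: "0 < u" "u < y"
    have "DERIV \<phi> u :> cos u - 1/2" unfolding \<phi>_def[abs_def]
      by (auto intro!: derivative_eq_intros)
    moreover have "cos (pi/3) \<le> cos u"
      using u assms pi_gt3 by (intro cos_monotone_0_pi_le) auto
    hence "cos u - 1/2 \<ge> 0" by (simp add: cos_60)
    ultimately show "\<exists>d. DERIV \<phi> u :> d \<and> 0 \<le> d" by blast
  next
    show "continuous_on {0..y} \<phi>" unfolding \<phi>_def
      by (intro continuous_on_diff continuous_on_sin continuous_on_id continuous_on_divide continuous_on_const) auto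
  qed
  thus ?thesis by (simp add: \<phi>_def)
qed

lemma norm_1_cis_lower:
  assumes "0 \<le> h" "h \<le> 1"
  shows "h / 2 \<le> cmod (1 - cis h)"
proof -
  have "h / 2 \<le> sin h" by (rule sin_half_lower) fact+
  also have "sin h \<le> \<bar>Im (1 - cis h)\<bar>" by simp
  also have "\<dots> \<le> cmod (1 - cis h)" by (rule abs_Im_le_cmod)
  finally show ?thesis .
qed

lemma sum_gf_bound:
  assumes a: "0 < \<alpha>" "\<alpha> < 2*pi" and M: "2 \<le> M" "\<alpha> \<le> real M"
  shows "(\<Sum>m=1..M. gf (real m * \<alpha> / real M))
           \<le> real M * Cl2 \<alpha> / \<alpha> + ln (real M) + (ln (2/\<alpha>) + gf \<alpha> + 2 * ln 2)"
proof -
  define h where "h = \<alpha> / real M"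
  have M0: "real M > 0" using M by simp
  have h: "0 < h" "h \<le> 1" "h \<le> \<alpha> / 2" "real M * h = \<alpha>"
    using a M M0 by (auto simp: h_def field_simps)
  have gm: "\<And>m. gf (real m * \<alpha> / real M) = gf (real m * h)" by (simp add: h_def)
  define F where "F i = Cl2 ((real i - 1/2) * h)" for i :: nat
  have mid: "h * gf (real m * h) \<le> F (Suc m) - F m" if m: "m \<in> {2..<M}" for m
  proof -
    have m2: "2 \<le> real m" "real m + 1 \<le> real M" using m by auto
    have "2 * (h/2) * gf (real m * h) \<le> Cl2 (real m * h + h/2) - Cl2 (real m * h - h/2)"
    proof (rule HH)
      show "0 \<le> h/2" using h by simp
      have e1: "real m * h - h/2 = (real m - 1/2) * h" by (simp add: field_simps)
      show "0 < real m * h - h/2" unfolding e1 using h m2 by (intro mult_pos_pos) auto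
      have e2: "real m * h + h/2 = (real m + 1/2) * h" by (simp add: field_simps)
      have "real m * h + h/2 \<le> (real M - 1/2) * h" unfolding e2 using h m2 by (intro mult_right_mono) auto
      also have "\<dots> < real M * h" using h by (simp add: field_simps)
      finally show "real m * h + h/2 < 2*pi" using h a by simp
    qed
    moreover have "real m * h + h/2 = (real (Suc m) - 1/2) * h" "real m * h - h/2 = (real m - 1/2) * h"
      by (simp_all add: field_simps)
    ultimately show ?thesis by (simp add: F_def)
  qed
  have "h * (\<Sum>m=2..<M. gf (real m * h)) = (\<Sum>m=2..<M. h * gf (real m * h))"
    by (simp add: sum_distrib_left)
  also have "\<dots> \<le> (\<Sum>m=2..<M. F (Suc m) - F m)" by (rule sum_mono) (rule mid)
  also have "\<dots> = F M - F 2" using M by (intro sum_Suc_diff') auto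
  finally have s1: "h * (\<Sum>m=2..<M. gf (real m * h)) \<le> F M - F 2" .
  have s2: "F M \<le> Cl2 \<alpha> + (h/2) * ln 2"
  proof -
    have "- (\<alpha> - (real M - 1/2) * h) * ln 2 \<le> Cl2 \<alpha> - Cl2 ((real M - 1/2) * h)"
      by (rule Cl2_incr_lower) (use h a M in \<open>auto simp: field_simps\<close>)
    moreover have "\<alpha> - (real M - 1/2) * h = h/2" using h by (simp add: field_simps)
    ultimately show ?thesis by (simp add: F_def)
  qed
  have s3: "- F 2 \<le> (3/2 * h) * ln 2"
  proof -
    have "- (3/2 * h - 0) * ln 2 \<le> Cl2 (3/2 * h) - Cl2 0"
      by (rule Cl2_incr_lower) (use h a in \<open>auto simp: field_simps\<close>)
    thus ?thesis by (simp add: F_def Cl2_0)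
  qed
  have "h * (\<Sum>m=2..<M. gf (real m * h)) \<le> Cl2 \<alpha> + h * (2 * ln 2)"
    using s1 s2 s3 by (simp add: algebra_simps)
  hence "(\<Sum>m=2..<M. gf (real m * h)) \<le> (Cl2 \<alpha> + h * (2 * ln 2)) / h"
    using h(1) by (simp add: pos_le_divide_eq mult.commute)
  also have "(Cl2 \<alpha> + h * (2 * ln 2)) / h = real M * Cl2 \<alpha> / \<alpha> + 2 * ln 2"
    using h(1) a M0 by (simp add: h_def field_simps)
  finally have midb: "(\<Sum>m=2..<M. gf (real m * h)) \<le> real M * Cl2 \<alpha> / \<alpha> + 2 * ln 2" .
  have g1: "gf h \<le> ln (real M) + ln (2/\<alpha>)"
  proof -
    have "h/2 \<le> cmod (1 - cis h)" using h by (intro norm_1_cis_lower) auto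
    hence "ln (h/2) \<le> ln (cmod (1 - cis h))" using h by (subst ln_le_cancel_iff) auto
    moreover have "ln (h/2) = - (ln (real M) + ln (2/\<alpha>))"
      using h a M0 by (simp add: h_def ln_div ln_mult)
    ultimately show ?thesis by (simp add: gf_def)
  qed
  have split: "{1..M} = insert 1 (insert M {2..<M})" using M by auto
  have "(\<Sum>m=1..M. gf (real m * h)) = gf h + (gf (real M * h) + (\<Sum>m=2..<M. gf (real m * h)))"
    unfolding split using M by (subst sum.insert; simp)+
  also have "real M * h = \<alpha>" by fact
  finally show ?thesis unfolding gm using midb g1 by linarith
qed

lemma prod_cis_bound:
  assumes a: "0 < \<alpha>" "\<alpha> < 2*pi" and M: "2 \<le> M" "\<alpha> \<le> real M"
  shows "inverse (\<Prod>m=1..M. cmod (cis (real m * \<alpha> / real M) - 1))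
           \<le> exp (ln (2/\<alpha>) + gf \<alpha> + 2 * ln 2) * real M * exp (real M * (Cl2 \<alpha> / \<alpha>))"
proof -
  define K where "K = ln (2/\<alpha>) + gf \<alpha> + 2 * ln 2"
  have M0: "real M > 0" using M by simp
  have tm: "cmod (cis (real m * \<alpha> / real M) - 1) = exp (- gf (real m * \<alpha> / real M))"
    if m: "m \<in> {1..M}" for m
  proof -
    have "0 < real m * \<alpha> / real M" using m a M0 by auto
    moreover have "real m * \<alpha> / real M \<le> \<alpha>" using m a M0 by (simp add: field_simps)
    ultimately have "cmod (1 - cis (real m * \<alpha> / real M)) > 0" using a by (intro norm_1_cis_pos) auto
    thus ?thesis by (simp add: gf_def norm_minus_commute)
  qed
  have "(\<Prod>m=1..M. cmod (cis (real m * \<alpha> / real M) - 1)) = (\<Prod>m=1..M. exp (- gf (real m * \<alpha> / real M)))"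
    by (rule prod.cong) (auto simp: tm)
  also have "\<dots> = exp (\<Sum>m=1..M. - gf (real m * \<alpha> / real M))"
    by (rule exp_sum[symmetric]) simp
  also have "\<dots> = exp (- (\<Sum>m=1..M. gf (real m * \<alpha> / real M)))"
    by (simp only: sum_negf)
  finally have "inverse (\<Prod>m=1..M. cmod (cis (real m * \<alpha> / real M) - 1)) = exp (\<Sum>m=1..M. gf (real m * \<alpha> / real M))"
    by (simp add: exp_minus)
  also have "\<dots> \<le> exp (real M * Cl2 \<alpha> / \<alpha> + ln (real M) + K)"
    unfolding K_def using sum_gf_bound[OF a M] by simp
  also have "\<dots> = exp K * real M * exp (real M * (Cl2 \<alpha> / \<alpha>))"
    using M0 by (simp add: exp_add)
  finally show ?thesis by (simp add: K_def)
qed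

lemma norm_cis_diff: "cmod (cis a - cis b) \<le> \<bar>a - b\<bar>"
proof -
  have "cis b * cis (a - b) = cis a" by (simp add: cis_mult)
  hence "cis a - cis b = cis b * (cis (a - b) - 1)" by (simp add: algebra_simps)
  hence "cmod (cis a - cis b) = cmod (1 - cis (a - b))" by (simp add: norm_mult norm_minus_commute)
  also have "\<dots> \<le> \<bar>a - b\<bar>"
  proof -
    have "(cmod (1 - cis (a - b)))^2 = 2 - 2 * cos (a - b)" by (rule norm_1_cis_sq)
    also have "\<dots> = 4 * (sin ((a - b)/2))^2"
    proof -
      have e: "2 * ((a - b)/2) = a - b" by simp
      have "cos (a - b) = 1 - 2 * sin ((a-b)/2) ^ 2" using cos_double_sin[of "(a-b)/2"] unfolding e .
      thus ?thesis by simp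
    qed
    also have "\<dots> = (2 * \<bar>sin ((a - b)/2)\<bar>)^2" by (simp add: power_mult_distrib)
    also have "\<dots> \<le> (2 * \<bar>(a - b)/2\<bar>)^2"
      by (intro power_mono mult_left_mono abs_sin_x_le_abs_x) auto
    also have "\<dots> = \<bar>a - b\<bar>^2" by simp
    finally show ?thesis by (rule power2_le_imp_le) simp
  qed
  finally show ?thesis .
qed

lemma prim_basic:
  assumes "primitive_root_unity k \<rho>"
  shows "k \<ge> 1" "\<rho>^k = 1" "\<rho> \<noteq> 0" "cmod \<rho> = 1"
    "\<And>m. 0 < m \<Longrightarrow> m < k \<Longrightarrow> \<rho>^m \<noteq> 1"
proof -
  show k: "k \<ge> 1" "\<rho>^k = 1" "\<And>m. 0 < m \<Longrightarrow> m < k \<Longrightarrow> \<rho>^m \<noteq> 1"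
    using assms by (auto simp: primitive_root_unity_def)
  show "\<rho> \<noteq> 0"
  proof
    assume "\<rho> = 0"
    hence "\<rho>^k = 0" using k(1) by simp
    thus False using k(2) by simp
  qed
  have "cmod (\<rho>^k) = 1" using k(2) by simp
  hence "cmod \<rho> ^ k = 1 ^ k" by (simp only: norm_power power_one)
  moreover have "0 < k" using k(1) by simp
  ultimately show "cmod \<rho> = 1" using power_eq_imp_eq_base[of "cmod \<rho>" k 1] by simp
qed

lemma prim_inj:
  assumes "primitive_root_unity k \<rho>"
  shows "inj_on (\<lambda>r. \<rho>^r) {1..k}"
proof -
  note p = prim_basic[OF assms]
  have *: "False" if "i \<in> {1..k}" "j \<in> {1..k}" "i < j" "\<rho>^i = \<rho>^j" for i j
  proof -
    have e: "i + (j - i) = j" using that by simp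
    have "\<rho>^j = \<rho>^i * \<rho>^(j - i)" using power_add[of \<rho> i "j - i"] unfolding e by simp
    hence "\<rho>^i * \<rho>^(j - i) = \<rho>^i * 1" using that by simp
    hence "\<rho>^(j - i) = 1" using p(3) by (subst (asm) mult_left_cancel) auto
    moreover have "0 < j - i" "j - i < k" using that by auto
    ultimately show False using p(5) by blast
  qed
  show ?thesis unfolding inj_on_def
  proof (intro ballI impI)
    fix i j assume ij: "i \<in> {1..k}" "j \<in> {1..k}" "\<rho>^i = \<rho>^j"
    show "i = j"
    proof (rule ccontr)
      assume "i \<noteq> j"
      then consider "i < j" | "j < i" by linarith
      thus False
      proof cases
        case 1 show False by (rule *[OF ij(1,2) 1 ij(3)])
      next
        case 2 show False by (rule *[OF ij(2,1) 2 ij(3)[symmetric]])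
      qed
    qed
  qed
qed

lemma prod_roots:
  assumes "primitive_root_unity k \<rho>"
  shows "(\<Prod>r\<in>{1..k}. (w - \<rho>^r)) = w^k - 1"
proof -
  note pb = prim_basic[OF assms]
  define p where "p = (\<Prod>r\<in>{1..k}. [:-(\<rho>^r), 1:])"
  define q :: "complex poly" where "q = monom 1 k - 1"
  define A where "A = (\<lambda>r. \<rho>^r) ` {1..k}"
  have degp: "degree p = k" unfolding p_def
    by (subst degree_prod_eq_sum_degree) auto
  have lcp: "lead_coeff p = 1" unfolding p_def by (simp add: lead_coeff_prod)
  have "p = q"
  proof (rule poly_eqI_degree_lead_coeff[of p k q A])
    show "poly.coeff p k = poly.coeff q k"
      using lcp degp pb(1) by (simp add: q_def coeff_monom)
    show "k \<le> card A" unfolding A_def using card_image[OF prim_inj[OF assms]] by simp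
    show "degree p \<le> k" using degp by simp
    show "degree q \<le> k" unfolding q_def
      by (intro degree_diff_le degree_monom_le) auto
    fix z assume "z \<in> A"
    then obtain s where s: "s \<in> {1..k}" "z = \<rho>^s" by (auto simp: A_def)
    have "poly p z = (\<Prod>r\<in>{1..k}. z - \<rho>^r)" by (simp add: p_def poly_prod)
    also have "\<dots> = 0" using s by (intro prod_zero) auto
    also have "0 = poly q z"
    proof -
      have "z^k = (\<rho>^k)^s" using s by (simp flip: power_mult add: mult.commute)
      thus ?thesis using pb(2) by (simp add: q_def poly_monom)
    qed
    finally show "poly p z = poly q z" .
  qed
  hence "poly p w = poly q w" by simp
  thus ?thesis by (simp add: p_def q_def poly_prod poly_monom)
qed

lemma prod_norm_roots:
  assumes "primitive_root_unity k \<rho>" "cmod z = 1"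
  shows "(\<Prod>r\<in>{1..k}. cmod (\<rho>^r * z - 1)) = cmod (z^k - 1)"
proof -
  define w where "w = cnj z"
  have zw: "z * w = 1" using complex_norm_square[of z] assms(2) by (simp add: w_def)
  have "cmod (\<rho>^r * z - 1) = cmod (w - \<rho>^r)" for r
  proof -
    have "\<rho>^r * z - 1 = z * (\<rho>^r - w)" using zw by (simp add: algebra_simps)
    thus ?thesis using assms(2) by (simp add: norm_mult norm_minus_commute)
  qed
  hence "(\<Prod>r\<in>{1..k}. cmod (\<rho>^r * z - 1)) = cmod (\<Prod>r\<in>{1..k}. (w - \<rho>^r))"
    by (simp add: prod_norm)
  also have "\<dots> = cmod (w^k - 1)" unfolding prod_roots[OF assms(1)] ..
  also have "w^k - 1 = cnj (z^k - 1)" by (simp add: w_def)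
  also have "cmod (cnj (z^k - 1)) = cmod (z^k - 1)" by (rule complex_mod_cnj)
  finally show ?thesis .
qed

lemma c_bound:
  assumes prim: "primitive_root_unity k \<rho>" and th: "0 < \<theta>" "real k * \<theta> < 2 * pi"
  shows "\<exists>c>0. \<forall>r\<in>{1..<k}. \<forall>\<psi>\<in>{0..\<theta>}. c \<le> cmod (\<rho>^r * cis \<psi> - 1)"
proof -
  note pb = prim_basic[OF prim]
  define S where "S = (\<Union>r\<in>{1..<k}. (\<lambda>\<psi>. \<rho>^r * cis \<psi>) ` {0..\<theta>})"
  have "compact S" unfolding S_def
    by (intro compact_UN finite_atLeastLessThan compact_continuous_image continuous_on_mult
          continuous_on_const continuous_on_cis continuous_on_id compact_Icc)
  hence cl: "closed S" by (rule compact_imp_closed)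
  have n1: "1 \<notin> S"
  proof
    assume "1 \<in> S"
    then obtain r \<psi> where r: "r \<in> {1..<k}" "\<psi> \<in> {0..\<theta>}" "\<rho>^r * cis \<psi> = 1"
      by (auto simp: S_def)
    have "(\<rho>^r * cis \<psi>)^k = (\<rho>^k)^r * cis (real k * \<psi>)"
      by (simp add: power_mult_distrib Complex.DeMoivre flip: power_mult) (simp add: mult.commute)
    hence ck: "cis (real k * \<psi>) = 1" using r(3) pb(2) by simp
    have kp: "real k * \<psi> < 2 * pi"
      using r(2) th pb(1) by (smt (verit) atLeastAtMost_iff mult_left_mono of_nat_0_le_iff)
    have "real k * \<psi> = 0"
    proof (rule ccontr)
      assume "real k * \<psi> \<noteq> 0"
      hence "0 < real k * \<psi>" using r(2) by simp
      thus False using cis_ne_1[OF _ kp] ck by blast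
    qed
    hence "\<psi> = 0" using pb(1) by simp
    hence "\<rho>^r = 1" using r(3) by simp
    thus False using pb(5)[of r] r(1) by simp
  qed
  obtain d where d: "d > 0" "\<And>x. x \<in> S \<Longrightarrow> d \<le> dist 1 x"
    using separate_point_closed[OF cl n1] by blast
  show ?thesis
  proof (intro exI[of _ d] conjI ballI)
    show "d > 0" by fact
    fix r \<psi> assume rp: "r \<in> {1..<k}" "\<psi> \<in> {0..\<theta>}"
    have "\<rho>^r * cis \<psi> \<in> S" unfolding S_def
      by (rule UN_I[OF rp(1)]) (rule imageI[OF rp(2)])
    from d(2)[OF this] show "d \<le> cmod (\<rho>^r * cis \<psi> - 1)" by (simp add: dist_norm norm_minus_commute)
  qed
qed

lemma block_prod:
  fixes f :: "nat \<Rightarrow> 'a::comm_monoid_mult"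
  shows "prod f {1..k*M} = (\<Prod>m\<in>{1..M}. \<Prod>r\<in>{1..k}. f (k*(m-1)+r))"
proof (induction M)
  case 0 thus ?case by simp
next
  case (Suc M)
  have "prod f {1..k*M + k} = prod f {1..k*M} * prod f {k*M + 1..k*M + k}"
    by (rule prod.ub_add_nat) simp
  also have "prod f {k*M + 1..k*M + k} = (\<Prod>r\<in>{1..k}. f (k*M + r))"
    using prod.shift_bounds_cl_nat_ivl[of f 1 "k*M" k] by (simp add: add.commute)
  finally have "prod f {1..k * Suc M} = prod f {1..k*M} * (\<Prod>r\<in>{1..k}. f (k*M + r))"
    by (simp add: algebra_simps)
  also have "\<dots> = (\<Prod>m\<in>{1..Suc M}. \<Prod>r\<in>{1..k}. f (k*(m-1)+r))"
    using Suc.IH by simp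
  finally show ?case .
qed

lemma elem_bound:
  assumes prim: "primitive_root_unity k \<rho>" and th: "0 < \<theta>"
    and c: "c > 0" "\<forall>r\<in>{1..<k}. \<forall>\<psi>\<in>{0..\<theta>}. c \<le> cmod (\<rho>^r * cis \<psi> - 1)"
    and M: "1 \<le> M" and m: "m \<in> {1..M}" and r: "r \<in> {1..k}"
    and y: "y = \<theta> / real M / c" "y \<le> 1"
  shows "(1 - y) * cmod (\<rho>^r * cis (real m * \<theta> / real M) - 1)
           \<le> cmod (\<rho>^(k*(m-1)+r) * exp (\<i> * of_real (real (k*(m-1)+r) * \<theta> / real (k*M))) - 1)"
proof -
  note pb = prim_basic[OF prim]
  define \<psi> where "\<psi> = real m * \<theta> / real M"
  define \<phi> where "\<phi> = real (k*(m-1)+r) * \<theta> / real (k*M)"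
  define b where "b = \<rho>^r * cis \<psi> - 1"
  define a where "a = \<rho>^r * cis \<phi> - 1"
  have kpos: "real k > 0" using pb(1) by simp
  have Mpos: "real M > 0" using M by simp
  have rhoj: "\<rho>^(k*(m-1)+r) = \<rho>^r"
  proof -
    have "\<rho>^(k*(m-1)+r) = (\<rho>^k)^(m-1) * \<rho>^r" by (simp only: power_add power_mult)
    also have "\<dots> = \<rho>^r" using pb(2) by simp
    finally show ?thesis .
  qed
  have lhs: "\<rho>^(k*(m-1)+r) * exp (\<i> * of_real (real (k*(m-1)+r) * \<theta> / real (k*M))) - 1 = a"
    unfolding rhoj by (simp add: a_def \<phi>_def cis_conv_exp)
  have rj: "real (k*(m-1)+r) = real k * (real m - 1) + real r" using m by (simp add: of_nat_diff)
  have diff: "\<psi> - \<phi> = (real k - real r) * \<theta> / (real k * real M)"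
    unfolding \<psi>_def \<phi>_def rj using kpos Mpos by (simp add: field_simps)
  have d1: "\<bar>\<phi> - \<psi>\<bar> \<le> \<theta> / real M"
  proof -
    have "0 \<le> real k - real r" "real k - real r \<le> real k" using r by auto
    hence "0 \<le> (real k - real r) * \<theta> / (real k * real M)"
      using th kpos Mpos by (intro divide_nonneg_pos mult_nonneg_nonneg) auto
    moreover have "(real k - real r) * \<theta> / (real k * real M) \<le> real k * \<theta> / (real k * real M)"
      using th kpos Mpos \<open>real k - real r \<le> real k\<close> by (intro divide_right_mono mult_right_mono) auto
    moreover have "real k * \<theta> / (real k * real M) = \<theta> / real M" using kpos by simp
    ultimately have "0 \<le> \<psi> - \<phi>" "\<psi> - \<phi> \<le> \<theta> / real M" using diff by linarith+
    thus ?thesis by (simp add: abs_le_iff)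
  qed
  have bn: "0 \<le> cmod b" by simp
  have y0: "0 \<le> y" using y th Mpos c by simp
  show ?thesis unfolding lhs
  proof (cases "r = k")
    case True
    hence "\<psi> = \<phi>" using diff by simp
    hence "a = b" by (simp add: a_def b_def)
    moreover have "(1 - y) * cmod b \<le> 1 * cmod b" using y0 bn by (intro mult_right_mono) auto
    ultimately show "(1 - y) * cmod (\<rho>^r * cis (real m * \<theta> / real M) - 1) \<le> cmod a"
      by (simp add: b_def \<psi>_def)
  next
    case False
    hence "r \<in> {1..<k}" using r by auto
    moreover have "\<psi> \<in> {0..\<theta>}" using m th Mpos by (auto simp: \<psi>_def field_simps)
    ultimately have cb: "c \<le> cmod b" using c(2) by (simp add: b_def)
    have "a - b = \<rho>^r * (cis \<phi> - cis \<psi>)" by (simp add: a_def b_def algebra_simps)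
    hence "cmod (a - b) = cmod (cis \<phi> - cis \<psi>)" using pb(4) by (simp add: norm_mult norm_power)
    also have "\<dots> \<le> \<bar>\<phi> - \<psi>\<bar>" by (rule norm_cis_diff)
    also have "\<dots> \<le> \<theta> / real M" by (rule d1)
    also have "\<theta> / real M = y * c" using y c by simp
    also have "\<dots> \<le> y * cmod b" using cb y0 by (intro mult_left_mono) auto
    finally have ab: "cmod (a - b) \<le> y * cmod b" .
    have "cmod b - cmod (a - b) \<le> cmod a" using norm_triangle_ineq2[of b a] by (simp add: norm_minus_commute)
    hence "(1 - y) * cmod b \<le> cmod a" using ab by (simp add: algebra_simps)
    thus "(1 - y) * cmod (\<rho>^r * cis (real m * \<theta> / real M) - 1) \<le> cmod a"
      by (simp add: b_def \<psi>_def)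
  qed
qed

lemma pow_lower:
  fixes y :: real
  assumes "0 \<le> y" "y \<le> 1/2"
  shows "exp (- 2 * y * real n) \<le> (1 - y)^n"
proof -
  have "- y - 2 * y\<^sup>2 \<le> ln (1 - y)" by (rule ln_one_minus_pos_lower_bound) fact+
  moreover have "2 * y\<^sup>2 \<le> y"
  proof -
    have "y * (2 * y) \<le> y * 1" using assms by (intro mult_left_mono) auto
    thus ?thesis by (simp add: power2_eq_square algebra_simps)
  qed
  ultimately have l: "- 2 * y \<le> ln (1 - y)" by linarith
  have "real n * (- 2 * y) \<le> real n * ln (1 - y)" using l by (intro mult_left_mono) auto
  hence "exp (real n * (- 2 * y)) \<le> exp (real n * ln (1 - y))" by (simp only: exp_le_cancel_iff)
  moreover have "real n * (- 2 * y) = - 2 * y * real n" by simp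
  ultimately have "exp (- 2 * y * real n) \<le> exp (real n * ln (1 - y))" by metis
  also have "\<dots> = (1 - y)^n" using assms by (simp add: exp_of_nat_mult)
  finally show ?thesis .
qed

lemma main_large:
  assumes prim: "primitive_root_unity k \<rho>" and th: "0 < \<theta>" "real k * \<theta> < 2 * pi"
    and c: "c > 0" "\<forall>r\<in>{1..<k}. \<forall>\<psi>\<in>{0..\<theta>}. c \<le> cmod (\<rho>^r * cis \<psi> - 1)"
    and M: "2 \<le> M" "real k * \<theta> \<le> real M" "2 * \<theta> / c \<le> real M"
  shows "(\<Prod>j=1..k*M. inverse (cmod (\<rho>^j * exp (\<i> * of_real (real j * \<theta> / real (k*M))) - 1)))
         \<le> exp (2 * real k * \<theta> / c) * (exp (ln (2/(real k * \<theta>)) + gf (real k * \<theta>) + 2 * ln 2)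
              * real M * exp (real M * (Cl2 (real k * \<theta>) / (real k * \<theta>))))"
proof -
  note pb = prim_basic[OF prim]
  define \<alpha> where "\<alpha> = real k * \<theta>"
  define y where "y = \<theta> / real M / c"
  define A where "A j = cmod (\<rho>^j * exp (\<i> * of_real (real j * \<theta> / real (k*M))) - 1)" for j
  define P where "P m = cmod (cis (real m * \<alpha> / real M) - 1)" for m
  have Mpos: "real M > 0" using M by simp
  have kpos: "real k > 0" using pb(1) by simp
  have a: "0 < \<alpha>" "\<alpha> < 2 * pi" using th kpos by (auto simp: \<alpha>_def)
  have y0: "0 \<le> y" using th c Mpos by (simp add: y_def)
  have yh: "y \<le> 1/2"
  proof -
    have "2 * \<theta> \<le> real M * c" using M(3) c by (simp add: pos_divide_le_eq)
    thus ?thesis using Mpos c by (simp add: y_def field_simps)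
  qed
  have Ppos: "0 < P m" if "m \<in> {1..M}" for m
  proof -
    have "0 < real m * \<alpha> / real M" using that a Mpos by auto
    moreover have "real m * \<alpha> / real M \<le> \<alpha>" using that a Mpos by (simp add: field_simps)
    ultimately have "cmod (1 - cis (real m * \<alpha> / real M)) > 0" using a by (intro norm_1_cis_pos) auto
    thus ?thesis by (simp add: P_def norm_minus_commute)
  qed
  have blk: "(1 - y)^k * P m \<le> (\<Prod>r\<in>{1..k}. A (k*(m-1)+r))" if m: "m \<in> {1..M}" for m
  proof -
    define \<psi> where "\<psi> = real m * \<theta> / real M"
    have "(\<Prod>r\<in>{1..k}. (1 - y) * cmod (\<rho>^r * cis \<psi> - 1)) \<le> (\<Prod>r\<in>{1..k}. A (k*(m-1)+r))"
    proof (rule prod_mono)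
      fix r assume r: "r \<in> {1..k}"
      show "0 \<le> (1 - y) * cmod (\<rho>^r * cis \<psi> - 1) \<and> (1 - y) * cmod (\<rho>^r * cis \<psi> - 1) \<le> A (k*(m-1)+r)"
        using elem_bound[OF prim th(1) c _ m r y_def] yh M unfolding A_def \<psi>_def by auto
    qed
    also have "(\<Prod>r\<in>{1..k}. (1 - y) * cmod (\<rho>^r * cis \<psi> - 1)) = (1 - y)^k * (\<Prod>r\<in>{1..k}. cmod (\<rho>^r * cis \<psi> - 1))"
      by (simp add: prod.distrib)
    also have "(\<Prod>r\<in>{1..k}. cmod (\<rho>^r * cis \<psi> - 1)) = cmod (cis \<psi> ^ k - 1)"
      by (rule prod_norm_roots[OF prim]) simp
    also have "cis \<psi> ^ k = cis (real m * \<alpha> / real M)"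
      by (simp add: Complex.DeMoivre \<psi>_def \<alpha>_def field_simps)
    finally show ?thesis by (simp add: P_def)
  qed
  have "(\<Prod>m\<in>{1..M}. (1 - y)^k * P m) \<le> (\<Prod>m\<in>{1..M}. \<Prod>r\<in>{1..k}. A (k*(m-1)+r))"
  proof (rule prod_mono)
    fix m assume m: "m \<in> {1..M}"
    show "0 \<le> (1 - y)^k * P m \<and> (1 - y)^k * P m \<le> (\<Prod>r\<in>{1..k}. A (k*(m-1)+r))"
      using blk[OF m] Ppos[OF m] y0 yh by auto
  qed
  also have "\<dots> = (\<Prod>j\<in>{1..k*M}. A j)" by (rule block_prod[symmetric])
  finally have low: "(1 - y)^(k*M) * (\<Prod>m\<in>{1..M}. P m) \<le> (\<Prod>j\<in>{1..k*M}. A j)"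
    by (simp add: prod.distrib power_mult)
  have PPpos: "0 < (\<Prod>m\<in>{1..M}. P m)" using Ppos by (intro prod_pos) auto
  have ypos: "0 < (1 - y)^(k*M)" using yh by simp
  have "(\<Prod>j=1..k*M. inverse (A j)) = inverse (\<Prod>j\<in>{1..k*M}. A j)"
    using prod_inversef[of A "{1..k*M}"] by (simp add: o_def)
  also have "\<dots> \<le> inverse ((1 - y)^(k*M) * (\<Prod>m\<in>{1..M}. P m))"
    using low ypos PPpos by (intro le_imp_inverse_le) auto
  also have "\<dots> = inverse ((1 - y)^(k*M)) * inverse (\<Prod>m\<in>{1..M}. P m)"
    by (simp add: inverse_mult_distrib)
  also have "\<dots> \<le> exp (2 * real k * \<theta> / c) * (exp (ln (2/\<alpha>) + gf \<alpha> + 2 * ln 2) * real M * exp (real M * (Cl2 \<alpha> / \<alpha>)))"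
  proof (rule mult_mono)
    have "exp (- 2 * y * real (k*M)) \<le> (1 - y)^(k*M)" by (rule pow_lower) fact+
    moreover have "- 2 * y * real (k*M) = - (2 * real k * \<theta> / c)"
      using Mpos c by (simp add: y_def field_simps)
    ultimately have "exp (- (2 * real k * \<theta> / c)) \<le> (1 - y)^(k*M)" by simp
    hence "inverse ((1 - y)^(k*M)) \<le> inverse (exp (- (2 * real k * \<theta> / c)))"
      by (intro le_imp_inverse_le) auto
    thus "inverse ((1 - y)^(k*M)) \<le> exp (2 * real k * \<theta> / c)" by (simp add: exp_minus)
    show "inverse (\<Prod>m\<in>{1..M}. P m) \<le> exp (ln (2/\<alpha>) + gf \<alpha> + 2 * ln 2) * real M * exp (real M * (Cl2 \<alpha> / \<alpha>))"
      unfolding P_def by (rule prod_cis_bound[OF a M(1)]) (use M(2) in \<open>simp add: \<alpha>_def\<close>)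
    show "0 \<le> exp (2 * real k * \<theta> / c)" by simp
    show "0 \<le> inverse (\<Prod>m\<in>{1..M}. P m)" using PPpos by simp
  qed
  finally show ?thesis by (simp add: A_def \<alpha>_def)
qed

theorem proposition4p6:
  fixes k :: nat and \<rho> :: complex and \<theta> :: real
  assumes "primitive_root_unity k \<rho>"
    and "0 < \<theta>" and "\<theta> < 2 * pi / real k"
  shows "\<exists>C. \<forall>N::nat. N \<ge> 1 \<longrightarrow> k dvd N \<longrightarrow>
           (\<Prod>j=1..N. inverse (cmod (\<rho> ^ j * exp (\<i> * of_real (real j * \<theta> / real N)) - 1)))
             \<le> C * real N ^ (4 * k) * exp (real N / real k * (Cl2 (real k * \<theta>) / (real k * \<theta>)))"
proof -
  note pb = prim_basic[OF assms(1)]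
  have kpos: "real k > 0" using pb(1) by simp
  have kth: "real k * \<theta> < 2 * pi" using assms(3) kpos by (simp add: pos_less_divide_eq mult.commute)
  obtain c where c: "c > 0" "\<forall>r\<in>{1..<k}. \<forall>\<psi>\<in>{0..\<theta>}. c \<le> cmod (\<rho>^r * cis \<psi> - 1)"
    using c_bound[OF assms(1) assms(2) kth] by blast
  define \<alpha> where "\<alpha> = real k * \<theta>"
  define E where "E M = exp (real M * (Cl2 \<alpha> / \<alpha>))" for M :: nat
  define C1 where "C1 = exp (2 * real k * \<theta> / c) * exp (ln (2/\<alpha>) + gf \<alpha> + 2 * ln 2)"
  define L where "L N = (\<Prod>j=1..N. inverse (cmod (\<rho> ^ j * exp (\<i> * of_real (real j * \<theta> / real N)) - 1)))" for N
  define M0 where "M0 = nat \<lceil>max (2 * \<theta> / c) \<alpha>\<rceil> + 2"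
  have Epos: "E M > 0" for M by (simp add: E_def)
  have Lnn: "L N \<ge> 0" for N unfolding L_def by (intro prod_nonneg) auto
  have C1nn: "C1 \<ge> 0" by (simp add: C1_def)
  have large: "L (k*M) \<le> C1 * real M * E M" if M: "M0 \<le> M" for M
  proof -
    have "real M \<ge> real M0" using M by simp
    moreover have "max (2 * \<theta> / c) \<alpha> \<le> real (nat \<lceil>max (2 * \<theta> / c) \<alpha>\<rceil>)"
      by (rule real_nat_ceiling_ge)
    hence "real M0 \<ge> max (2 * \<theta> / c) \<alpha> + 2" unfolding M0_def by simp
    moreover have "2 \<le> M0" by (simp add: M0_def)
    ultimately have m: "2 \<le> M" "real k * \<theta> \<le> real M" "2 * \<theta> / c \<le> real M"
      by (auto simp: \<alpha>_def)
    have "L (k*M) \<le> exp (2 * real k * \<theta> / c) * (exp (ln (2/(real k * \<theta>)) + gf (real k * \<theta>) + 2 * ln 2)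
              * real M * exp (real M * (Cl2 (real k * \<theta>) / (real k * \<theta>))))"
      unfolding L_def by (rule main_large[OF assms(1) assms(2) kth c m])
    thus ?thesis by (simp add: C1_def E_def \<alpha>_def mult.assoc)
  qed
  define C where "C = C1 + (\<Sum>M<M0. L (k*M) / E M)"
  have Sn: "0 \<le> (\<Sum>M<M0. L (k*M) / E M)" using Lnn Epos by (intro sum_nonneg) (auto intro: divide_nonneg_pos)
  have CC1: "C1 \<le> C" using Sn by (simp add: C_def)
  have Cnn: "0 \<le> C" using CC1 C1nn by linarith
  show ?thesis
  proof (intro exI[of _ C] allI impI)
    fix N :: nat assume N: "N \<ge> 1" "k dvd N"
    then obtain M where NM: "N = k * M" by blast
    have M1: "M \<ge> 1" using N NM by (cases M) auto
    have ex: "real N / real k * (Cl2 (real k * \<theta>) / (real k * \<theta>)) = real M * (Cl2 \<alpha> / \<alpha>)"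
      using kpos by (simp add: NM \<alpha>_def)
    have Np: "1 \<le> real N ^ (4 * k)" using N by simp
    have MN: "real M \<le> real N ^ (4 * k)"
    proof -
      have "M \<le> N" using NM pb(1) by simp
      hence "real M \<le> real N" by simp
      also have "real N = real N ^ 1" by simp
      also have "\<dots> \<le> real N ^ (4 * k)" using N pb(1) by (intro power_increasing) auto
      finally show ?thesis .
    qed
    have goal: "L N \<le> C * real N ^ (4 * k) * E M"
    proof (cases "M0 \<le> M")
      case True
      have "L N \<le> C1 * real M * E M" using large[OF True] NM by simp
      also have "\<dots> \<le> C * real N ^ (4 * k) * E M"
        using CC1 MN C1nn Epos[of M] by (intro mult_right_mono mult_mono) auto
      finally show ?thesis .
    next
      case False
      hence "M \<in> {..<M0}" by simp
      hence "L (k*M) / E M \<le> (\<Sum>M<M0. L (k*M) / E M)"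
        using Lnn Epos by (intro member_le_sum) (auto intro: divide_nonneg_pos)
      hence "L N / E M \<le> C" using CC1 NM C1nn by (simp add: C_def)
      hence "L N \<le> C * E M" using Epos[of M] by (simp add: pos_divide_le_eq)
      also have "\<dots> \<le> C * real N ^ (4 * k) * E M"
      proof -
        have "C * 1 \<le> C * real N ^ (4 * k)" by (rule mult_left_mono[OF Np Cnn])
        thus ?thesis using Epos[of M] by (intro mult_right_mono) auto
      qed
      finally show ?thesis .
    qed
    thus "(\<Prod>j=1..N. inverse (cmod (\<rho> ^ j * exp (\<i> * of_real (real j * \<theta> / real N)) - 1)))
             \<le> C * real N ^ (4 * k) * exp (real N / real k * (Cl2 (real k * \<theta>) / (real k * \<theta>)))"
      unfolding ex by (simp add: L_def E_def)
  qed
qed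

end
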